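(* Let $\mu$ be a probability measure on $\mathbb{R}^n$ with finite first moment whose support is not contained in any affine hyperplane. Then there is a constant $c=c_\mu>0$ such that for every probability measure $\varrho$ on $\mathbb{R}^n$ with finite first moment and barycenter at the origin, $$\mathcal{T}(\varrho,\mu)\ \ge\ c\int_{\mathbb{R}^n}|x|\,d\varrho(x).$$
   Context: For probability measures $\varrho,\mu$ on $\mathbb{R}^n$ with finite first moment, $\Pi(\varrho,\mu)$ is the set of measures $\pi$ on $\mathbb{R}^n\times\mathbb{R}^n$ with marginals $\varrho$ and $\mu$, and the maximal correlation functional is $\mathcal{T}(\varrho,\mu)=\sup\{\int_{\mathbb{R}^n\times\mathbb{R}^n}\langle x,y\rangle\,d\pi(x,y):\pi\in\Pi(\varrho,\mu)\}$. The measure $\varrho$ is not assumed absolutely continuous. *)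

theory Defs
  imports "HOL-Probability.Probability"
begin

definition prob_fm :: "'a::euclidean_space measure \<Rightarrow> bool" where
  "prob_fm M \<longleftrightarrow> prob_space M \<and> sets M = sets borel \<and> integrable M (\<lambda>x. norm x)"

definition couplings :: "'a::euclidean_space measure \<Rightarrow> 'a measure \<Rightarrow> ('a \<times> 'a) measure set" where
  "couplings \<rho> \<mu> = {\<pi>. prob_space \<pi> \<and> sets \<pi> = sets (borel \<Otimes>\<^sub>M borel)
       \<and> distr \<pi> borel fst = \<rho> \<and> distr \<pi> borel snd = \<mu>}"

definition corr_pos :: "('a::euclidean_space \<times> 'a) measure \<Rightarrow> ennreal" where
  "corr_pos \<pi> = (\<integral>\<^sup>+ z. ennreal (max 0 (fst z \<bullet> snd z)) \<partial>\<pi>)"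

definition corr_neg :: "('a::euclidean_space \<times> 'a) measure \<Rightarrow> ennreal" where
  "corr_neg \<pi> = (\<integral>\<^sup>+ z. ennreal (max 0 (- (fst z \<bullet> snd z))) \<partial>\<pi>)"

text \<open>Integral of \<open>\<langle>x,y\<rangle>\<close> in the extended sense (defined when not both parts are infinite).\<close>
definition corr_integral :: "('a::euclidean_space \<times> 'a) measure \<Rightarrow> ereal" where
  "corr_integral \<pi> = enn2ereal (corr_pos \<pi>) - enn2ereal (corr_neg \<pi>)"

definition max_corr :: "'a::euclidean_space measure \<Rightarrow> 'a measure \<Rightarrow> ereal" where
  "max_corr \<rho> \<mu> = (SUP \<pi> \<in> {\<pi> \<in> couplings \<rho> \<mu>. corr_pos \<pi> < \<infinity> \<or> corr_neg \<pi> < \<infinity>}.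
       corr_integral \<pi>)"

definition msupport :: "'a::euclidean_space measure \<Rightarrow> 'a set" where
  "msupport M = {x. \<forall>e>0. emeasure M (ball x e) > 0}"

definition affine_hyperplane :: "'a::euclidean_space set \<Rightarrow> bool" where
  "affine_hyperplane H \<longleftrightarrow> (\<exists>a b. a \<noteq> 0 \<and> H = {x. a \<bullet> x = b})"

end

theory Submission
  imports Defs
begin


lemma sets_borel_measurable_eq:
  assumes "sets M = sets borel"
  shows "borel_measurable M = borel_measurable borel"
  by (rule measurable_cong_sets[OF assms refl])

lemma arctan_abs_le: "\<bar>arctan x\<bar> \<le> pi/2"
  using arctan_bounded[of x] by linarith

lemma integrable_bdd_mult:
  fixes f :: "_ \<Rightarrow> 'b::{banach,second_countable_topology}"
  assumes f: "integrable M f" and g: "g \<in> borel_measurable M" and B: "\<And>x. \<bar>g x\<bar> \<le> B"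
  shows "integrable M (\<lambda>x. g x *\<^sub>R f x)"
proof (rule Bochner_Integration.integrable_bound[where f="\<lambda>x. B *\<^sub>R f x"])
  show "integrable M (\<lambda>x. B *\<^sub>R f x)" using f by simp
  show "(\<lambda>x. g x *\<^sub>R f x) \<in> borel_measurable M"
    by (intro borel_measurable_scaleR g borel_measurable_integrable[OF f])
  show "AE x in M. norm (g x *\<^sub>R f x) \<le> norm (B *\<^sub>R f x)"
  proof (intro AE_I2)
    fix x
    have "0 \<le> B" using B[of x] by linarith
    then show "norm (g x *\<^sub>R f x) \<le> norm (B *\<^sub>R f x)"
      using B[of x] by (simp add: mult_right_mono)
  qed
qed

lemma cov_pos:
  fixes \<mu> :: "'a::euclidean_space measure" and w :: 'a
  assumes fm: "prob_fm \<mu>"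
    and supp: "\<not> (\<exists>H. affine_hyperplane H \<and> msupport \<mu> \<subseteq> H)"
    and w: "w \<noteq> 0"
  shows "w \<bullet> (\<integral>y. (arctan (w \<bullet> y) - (\<integral>z. arctan (w \<bullet> z) \<partial>\<mu>)) *\<^sub>R y \<partial>\<mu>) > 0"
proof -
  interpret prob_space \<mu> using fm by (simp add: prob_fm_def)
  have sets: "sets \<mu> = sets borel" using fm by (simp add: prob_fm_def)
  have bm: "borel_measurable \<mu> = borel_measurable borel" by (rule sets_borel_measurable_eq[OF sets])
  have sp: "space \<mu> = UNIV" using sets_eq_imp_space_eq[OF sets] by simp
  have intn: "integrable \<mu> (\<lambda>x. norm x)" using fm by (simp add: prob_fm_def)
  have inty: "integrable \<mu> (\<lambda>x. x)"
    by (rule integrable_norm_cancel[OF intn]) (simp add: bm)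
  define E where "E = (\<integral>z. arctan (w \<bullet> z) \<partial>\<mu>)"
  define c where "c = (\<integral>z. w \<bullet> z \<partial>\<mu>)"
  have intZ: "integrable \<mu> (\<lambda>z. w \<bullet> z)" using inty by simp
  have intZc: "integrable \<mu> (\<lambda>z. w \<bullet> z - c)" using intZ by simp
  have inth: "integrable \<mu> (\<lambda>z. arctan (w \<bullet> z))"
    by (rule integrable_const_bound[where B="pi/2", OF AE_I2[OF arctan_abs_le[folded real_norm_def]]]) (simp add: bm)
  have intGy: "integrable \<mu> (\<lambda>y. (arctan (w \<bullet> y) - E) *\<^sub>R y)"
  proof (rule integrable_bdd_mult[OF inty])
    show "(\<lambda>x. arctan (w \<bullet> x) - E) \<in> borel_measurable \<mu>" by (simp add: bm)
    show "\<bar>arctan (w \<bullet> x) - E\<bar> \<le> pi/2 + \<bar>E\<bar>" for x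
      using arctan_abs_le[of "w \<bullet> x"] by linarith
  qed
  have i1: "integrable \<mu> (\<lambda>y. (arctan (w \<bullet> y) - arctan c) * (w \<bullet> y - c))"
  proof -
    have "integrable \<mu> (\<lambda>y. (arctan (w \<bullet> y) - arctan c) *\<^sub>R (w \<bullet> y - c))"
    proof (rule integrable_bdd_mult[OF intZc])
      show "(\<lambda>x. arctan (w \<bullet> x) - arctan c) \<in> borel_measurable \<mu>" by (simp add: bm)
      show "\<bar>arctan (w \<bullet> x) - arctan c\<bar> \<le> pi/2 + pi/2" for x
        using arctan_abs_le[of "w \<bullet> x"] arctan_abs_le[of c] by linarith
    qed
    then show ?thesis by simp
  qed
  have z1: "(\<integral>y. (w \<bullet> y - c) \<partial>\<mu>) = 0"
    using intZ by (simp add: Bochner_Integration.integral_diff prob_space c_def)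
  have z2: "(\<integral>y. (arctan (w \<bullet> y) - E) \<partial>\<mu>) = 0"
    using inth by (simp add: Bochner_Integration.integral_diff prob_space E_def)
  have "w \<bullet> (\<integral>y. (arctan (w \<bullet> y) - E) *\<^sub>R y \<partial>\<mu>) = (\<integral>y. w \<bullet> ((arctan (w \<bullet> y) - E) *\<^sub>R y) \<partial>\<mu>)"
    by (rule integral_inner_right[symmetric]) (rule intGy)
  also have "\<dots> = (\<integral>y. (arctan (w \<bullet> y) - arctan c) * (w \<bullet> y - c)
        + ((arctan c - E) * (w \<bullet> y - c) + c * (arctan (w \<bullet> y) - E) ) \<partial>\<mu>)"
    by (rule Bochner_Integration.integral_cong) (auto simp: algebra_simps)
  also have "\<dots> = (\<integral>y. (arctan (w \<bullet> y) - arctan c) * (w \<bullet> y - c) \<partial>\<mu>)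
        + ((arctan c - E) * (\<integral>y. (w \<bullet> y - c) \<partial>\<mu>) + c * (\<integral>y. (arctan (w \<bullet> y) - E) \<partial>\<mu>))"
    using i1 intZc inth by (simp add: Bochner_Integration.integral_add Bochner_Integration.integral_diff prob_space)
  also have "\<dots> = (\<integral>y. (arctan (w \<bullet> y) - arctan c) * (w \<bullet> y - c) \<partial>\<mu>)"
    using z1 z2 by simp
  finally have eq: "w \<bullet> (\<integral>y. (arctan (w \<bullet> y) - E) *\<^sub>R y \<partial>\<mu>) = (\<integral>y. (arctan (w \<bullet> y) - arctan c) * (w \<bullet> y - c) \<partial>\<mu>)" .
  have nn: "0 \<le> (arctan (w \<bullet> y) - arctan c) * (w \<bullet> y - c)" for y
    by (cases "w \<bullet> y \<le> c") (auto intro!: mult_nonneg_nonneg mult_nonpos_nonpos simp: arctan_le_iff)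
  have ge: "(\<integral>y. (arctan (w \<bullet> y) - arctan c) * (w \<bullet> y - c) \<partial>\<mu>) \<ge> 0"
    using nn by (simp add: integral_nonneg)
  have "(\<integral>y. (arctan (w \<bullet> y) - arctan c) * (w \<bullet> y - c) \<partial>\<mu>) \<noteq> 0"
  proof
    assume "(\<integral>y. (arctan (w \<bullet> y) - arctan c) * (w \<bullet> y - c) \<partial>\<mu>) = 0"
    then have "AE y in \<mu>. (arctan (w \<bullet> y) - arctan c) * (w \<bullet> y - c) = 0"
      using integral_nonneg_eq_0_iff_AE[OF i1] nn by simp
    then have AEc: "AE y in \<mu>. w \<bullet> y = c"
      by (rule AE_mp) (auto simp: arctan_eq_iff)
    have "\<not> msupport \<mu> \<subseteq> {x. w \<bullet> x = c}"
      using supp w unfolding affine_hyperplane_def by blast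
    then obtain y0 where y0: "y0 \<in> msupport \<mu>" "w \<bullet> y0 \<noteq> c" by auto
    define e where "e = \<bar>w \<bullet> y0 - c\<bar> / norm w"
    have e: "e > 0" using y0 w by (simp add: e_def)
    have pos: "emeasure \<mu> (ball y0 e) > 0" using y0 e by (simp add: msupport_def)
    have nb: "w \<bullet> x \<noteq> c" if "x \<in> ball y0 e" for x
    proof
      assume xc: "w \<bullet> x = c"
      have "\<bar>w \<bullet> y0 - c\<bar> = \<bar>w \<bullet> (y0 - x)\<bar>" using xc by (simp add: inner_diff_right)
      also have "\<dots> \<le> norm w * norm (y0 - x)" by (rule Cauchy_Schwarz_ineq2)
      also have "\<dots> < norm w * e" using that w by (simp add: dist_norm)
      also have "\<dots> = \<bar>w \<bullet> y0 - c\<bar>" using w by (simp add: e_def)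
      finally show False by simp
    qed
    have "AE y in \<mu>. \<not> (y \<in> ball y0 e)"
      using AEc by (rule AE_mp) (use nb in auto)
    from emeasure_eq_0_AE[OF this] have "emeasure \<mu> (ball y0 e) = 0" by (simp add: sp ball_def)
    with pos show False by simp
  qed
  with ge eq show ?thesis by (simp add: E_def)
qed



lemma finite_cover_dir:
  fixes V :: "'a::euclidean_space \<Rightarrow> 'a"
  assumes pos: "\<And>w. w \<noteq> 0 \<Longrightarrow> w \<bullet> V w > 0"
  shows "\<exists>W \<delta>. finite W \<and> \<delta> > 0 \<and> (\<forall>x. \<delta> * norm x \<le> (\<Sum>w\<in>W. max 0 (x \<bullet> V w)))"
proof -
  define C where "C w = {u. inner (V w) u > (w \<bullet> V w) / 2}" for w
  have "compact (sphere (0::'a) 1)" by simp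
  moreover have "\<And>T. T \<in> sphere 0 1 \<Longrightarrow> open (C T)" unfolding C_def by (rule open_halfspace_gt)
  moreover have "sphere (0::'a) 1 \<subseteq> (\<Union>c\<in>sphere 0 1. C c)"
  proof
    fix u :: 'a assume u: "u \<in> sphere 0 1"
    then have "u \<noteq> 0" by auto
    then have "u \<bullet> V u > 0" by (rule pos)
    then have "u \<in> C u" by (simp add: C_def inner_commute)
    with u show "u \<in> (\<Union>c\<in>sphere 0 1. C c)" by blast
  qed
  ultimately obtain W where W: "W \<subseteq> sphere 0 1" "finite W" "sphere (0::'a) 1 \<subseteq> (\<Union>c\<in>W. C c)"
    by (rule compactE_image)
  obtain b :: 'a where b: "b \<in> Basis" using nonempty_Basis by blast
  then have "b \<in> sphere 0 1" by simp
  with W have Wne: "W \<noteq> {}" by blast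
  define \<delta> where "\<delta> = Min ((\<lambda>w. (w \<bullet> V w) / 2) ` W)"
  have \<delta>pos: "\<delta> > 0"
  proof -
    have "0 < w \<bullet> V w" if "w \<in> W" for w
    proof -
      have "w \<in> sphere 0 1" using W(1) that by blast
      then have "w \<noteq> 0" by auto
      then show ?thesis by (rule pos)
    qed
    then show ?thesis unfolding \<delta>_def using W Wne by (subst Min_gr_iff) auto
  qed
  have \<delta>le: "\<delta> \<le> (w \<bullet> V w) / 2" if "w \<in> W" for w
    unfolding \<delta>_def using W that by (intro Min_le) auto
  have "\<delta> * norm x \<le> (\<Sum>w\<in>W. max 0 (x \<bullet> V w))" for x
  proof (cases "x = 0")
    case True
    then show ?thesis by (simp add: sum_nonneg)
  next
    case False
    define u where "u = x /\<^sub>R norm x"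
    have "u \<in> sphere 0 1" using False by (simp add: u_def)
    with W obtain w where w: "w \<in> W" "u \<in> C w" by blast
    have "\<delta> < u \<bullet> V w" using w \<delta>le[OF w(1)] by (simp add: C_def inner_commute)
    then have "norm x * \<delta> \<le> norm x * (u \<bullet> V w)" by (intro mult_left_mono) auto
    also have "norm x * (u \<bullet> V w) = x \<bullet> V w" using False by (simp add: u_def)
    also have "\<dots> \<le> max 0 (x \<bullet> V w)" by simp
    also have "\<dots> \<le> (\<Sum>w\<in>W. max 0 (x \<bullet> V w))"
      by (rule member_le_sum[OF w(1)]) (auto simp: W(2))
    finally show ?thesis by (simp add: mult.commute)
  qed
  with W(2) \<delta>pos show ?thesis by blast
qed

lemma coupling_density:
  fixes \<rho> \<mu> :: "'a::euclidean_space measure" and f :: "'a \<times> 'a \<Rightarrow> real"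
  assumes \<rho>: "prob_space \<rho>" "sets \<rho> = sets borel"
    and \<mu>: "prob_space \<mu>" "sets \<mu> = sets borel"
    and fm: "f \<in> borel_measurable (borel \<Otimes>\<^sub>M borel)" and nn: "\<And>z. 0 \<le> f z"
    and m1: "\<And>x. (\<integral>\<^sup>+y. ennreal (f (x,y)) \<partial>\<mu>) = 1"
    and m2: "\<And>y. (\<integral>\<^sup>+x. ennreal (f (x,y)) \<partial>\<rho>) = 1"
  shows "density (\<rho> \<Otimes>\<^sub>M \<mu>) f \<in> couplings \<rho> \<mu>"
proof -
  interpret p: pair_prob_space \<rho> \<mu>
    using \<rho>(1) \<mu>(1) by (simp add: pair_prob_space_def pair_sigma_finite_def prob_space_imp_sigma_finite)
  define \<pi> where "\<pi> = density (\<rho> \<Otimes>\<^sub>M \<mu>) f"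
  have sP: "sets (\<rho> \<Otimes>\<^sub>M \<mu>) = sets (borel \<Otimes>\<^sub>M borel)"
    by (rule sets_pair_measure_cong[OF \<rho>(2) \<mu>(2)])
  have spP: "space (\<rho> \<Otimes>\<^sub>M \<mu>) = UNIV"
    using sets_eq_imp_space_eq[OF sP] by (simp add: space_pair_measure)
  have sPi: "sets \<pi> = sets (borel \<Otimes>\<^sub>M borel)" using sP by (simp add: \<pi>_def)
  have spPi: "space \<pi> = UNIV" using spP by (simp add: \<pi>_def)
  have fmP: "(\<lambda>z. ennreal (f z)) \<in> borel_measurable (\<rho> \<Otimes>\<^sub>M \<mu>)"
    using fm by (simp add: measurable_cong_sets[OF sP refl])
  have fstm: "fst \<in> measurable \<pi> borel"
    using measurable_fst[of borel borel] by (simp add: measurable_cong_sets[OF sPi refl])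
  have sndm: "snd \<in> measurable \<pi> borel"
    using measurable_snd[of borel borel] by (simp add: measurable_cong_sets[OF sPi refl])
  have fx0: "(\<lambda>y. ennreal (f (x,y))) \<in> borel_measurable borel" for x
    using fm by measurable
  have fy0: "(\<lambda>x. ennreal (f (x,y))) \<in> borel_measurable borel" for y
    using fm by measurable
  have fx: "(\<lambda>y. ennreal (f (x,y))) \<in> borel_measurable \<mu>" for x
    by (subst measurable_cong_sets[OF \<mu>(2) refl]) (rule fx0)
  have fy: "(\<lambda>x. ennreal (f (x,y))) \<in> borel_measurable \<rho>" for y
    by (subst measurable_cong_sets[OF \<rho>(2) refl]) (rule fy0)
  have d1: "distr \<pi> borel fst = \<rho>"
  proof (rule measure_eqI)
    show "sets (distr \<pi> borel fst) = sets \<rho>" using \<rho>(2) by simp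
    fix A assume "A \<in> sets (distr \<pi> borel fst)"
    then have A: "A \<in> sets borel" by simp
    have Am: "fst -` A \<inter> space \<pi> \<in> sets (\<rho> \<Otimes>\<^sub>M \<mu>)"
      using measurable_sets[OF fstm A] by (simp add: \<pi>_def)
    have "emeasure (distr \<pi> borel fst) A = emeasure \<pi> (fst -` A \<inter> space \<pi>)"
      by (rule emeasure_distr[OF fstm A])
    also have "\<dots> = (\<integral>\<^sup>+z. ennreal (f z) * indicator (fst -` A \<inter> space \<pi>) z \<partial>(\<rho> \<Otimes>\<^sub>M \<mu>))"
      unfolding \<pi>_def by (rule emeasure_density[OF fmP Am[unfolded \<pi>_def]])
    also have "\<dots> = (\<integral>\<^sup>+x. \<integral>\<^sup>+y. ennreal (f (x,y)) * indicator A x \<partial>\<mu> \<partial>\<rho>)"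
    proof -
      have "(\<lambda>z. ennreal (f z) * indicator (fst -` A \<inter> space \<pi>) z) \<in> borel_measurable (\<rho> \<Otimes>\<^sub>M \<mu>)"
        using fmP Am by measurable
      from p.M2.nn_integral_fst[OF this] show ?thesis
        by (simp add: spPi indicator_def)
    qed
    also have "\<dots> = (\<integral>\<^sup>+x. (\<integral>\<^sup>+y. ennreal (f (x,y)) \<partial>\<mu>) * indicator A x \<partial>\<rho>)"
      by (rule nn_integral_cong) (simp add: nn_integral_multc[OF fx])
    also have "\<dots> = (\<integral>\<^sup>+x. indicator A x \<partial>\<rho>)" by (simp add: m1)
    also have "\<dots> = emeasure \<rho> A" using A \<rho>(2) by simp
    finally show "emeasure (distr \<pi> borel fst) A = emeasure \<rho> A" .
  qed
  have d2: "distr \<pi> borel snd = \<mu>"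
  proof (rule measure_eqI)
    show "sets (distr \<pi> borel snd) = sets \<mu>" using \<mu>(2) by simp
    fix A assume "A \<in> sets (distr \<pi> borel snd)"
    then have A: "A \<in> sets borel" by simp
    have Am: "snd -` A \<inter> space \<pi> \<in> sets (\<rho> \<Otimes>\<^sub>M \<mu>)"
      using measurable_sets[OF sndm A] by (simp add: \<pi>_def)
    have "emeasure (distr \<pi> borel snd) A = emeasure \<pi> (snd -` A \<inter> space \<pi>)"
      by (rule emeasure_distr[OF sndm A])
    also have "\<dots> = (\<integral>\<^sup>+z. ennreal (f z) * indicator (snd -` A \<inter> space \<pi>) z \<partial>(\<rho> \<Otimes>\<^sub>M \<mu>))"
      unfolding \<pi>_def by (rule emeasure_density[OF fmP Am[unfolded \<pi>_def]])
    also have "\<dots> = (\<integral>\<^sup>+y. \<integral>\<^sup>+x. ennreal (f (x,y)) * indicator A y \<partial>\<rho> \<partial>\<mu>)"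
    proof -
      have "(\<lambda>z. ennreal (f z) * indicator (snd -` A \<inter> space \<pi>) z) \<in> borel_measurable (\<rho> \<Otimes>\<^sub>M \<mu>)"
        using fmP Am by measurable
      from p.nn_integral_snd[OF this] show ?thesis
        by (simp add: spPi indicator_def)
    qed
    also have "\<dots> = (\<integral>\<^sup>+y. (\<integral>\<^sup>+x. ennreal (f (x,y)) \<partial>\<rho>) * indicator A y \<partial>\<mu>)"
      by (rule nn_integral_cong) (simp add: nn_integral_multc[OF fy])
    also have "\<dots> = (\<integral>\<^sup>+y. indicator A y \<partial>\<mu>)" by (simp add: m2)
    also have "\<dots> = emeasure \<mu> A" using A \<mu>(2) by simp
    finally show "emeasure (distr \<pi> borel snd) A = emeasure \<mu> A" .
  qed
  have "prob_space \<pi>"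
  proof
    have "emeasure \<pi> (space \<pi>) = emeasure (distr \<pi> borel fst) UNIV"
      by (subst emeasure_distr[OF fstm]) (auto simp: spPi)
    also have "\<dots> = 1" using d1 \<rho>(1) prob_space.emeasure_space_1[OF \<rho>(1)]
      sets_eq_imp_space_eq[OF \<rho>(2)] by simp
    finally show "emeasure \<pi> (space \<pi>) = 1" .
  qed
  with sPi d1 d2 show ?thesis by (simp add: couplings_def \<pi>_def)
qed

lemma corr_of_integrable:
  fixes \<pi> :: "('a::euclidean_space \<times> 'a) measure"
  assumes int: "integrable \<pi> (\<lambda>z. fst z \<bullet> snd z)"
  shows "corr_pos \<pi> < \<infinity>" "corr_integral \<pi> = ereal (\<integral>z. fst z \<bullet> snd z \<partial>\<pi>)"
proof -
  have bd: "(\<integral>\<^sup>+z. ennreal (norm (fst z \<bullet> snd z)) \<partial>\<pi>) < \<infinity>"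
    using int by (simp add: integrable_iff_bounded)
  have P: "corr_pos \<pi> = (\<integral>\<^sup>+z. ennreal (fst z \<bullet> snd z) \<partial>\<pi>)"
    unfolding corr_pos_def by (simp add: ennreal_max_0)
  have N: "corr_neg \<pi> = (\<integral>\<^sup>+z. ennreal (- (fst z \<bullet> snd z)) \<partial>\<pi>)"
    unfolding corr_neg_def by (simp add: ennreal_max_0)
  have "(\<integral>\<^sup>+z. ennreal (fst z \<bullet> snd z) \<partial>\<pi>) \<le> (\<integral>\<^sup>+z. ennreal (norm (fst z \<bullet> snd z)) \<partial>\<pi>)"
    by (rule nn_integral_mono) (simp add: ennreal_leI)
  with bd have Pf: "corr_pos \<pi> < \<infinity>" unfolding P by (simp add: le_less_trans)
  have "(\<integral>\<^sup>+z. ennreal (- (fst z \<bullet> snd z)) \<partial>\<pi>) \<le> (\<integral>\<^sup>+z. ennreal (norm (fst z \<bullet> snd z)) \<partial>\<pi>)"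
    by (rule nn_integral_mono) (simp add: ennreal_leI)
  with bd have Nf: "corr_neg \<pi> < \<infinity>" unfolding N by (simp add: le_less_trans)
  show "corr_pos \<pi> < \<infinity>" by (rule Pf)
  have "corr_integral \<pi> = ereal (enn2real (corr_pos \<pi>)) - ereal (enn2real (corr_neg \<pi>))"
  proof -
    have "enn2ereal (corr_pos \<pi>) = ereal (enn2real (corr_pos \<pi>))"
      using Pf by (metis enn2real_nonneg enn2ereal_ennreal ennreal_enn2real infinity_ennreal_def)
    moreover have "enn2ereal (corr_neg \<pi>) = ereal (enn2real (corr_neg \<pi>))"
      using Nf by (metis enn2real_nonneg enn2ereal_ennreal ennreal_enn2real infinity_ennreal_def)
    ultimately show ?thesis by (simp add: corr_integral_def)
  qed
  also have "\<dots> = ereal (\<integral>z. fst z \<bullet> snd z \<partial>\<pi>)"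
    using real_lebesgue_integral_def[OF int] P N by simp
  finally show "corr_integral \<pi> = ereal (\<integral>z. fst z \<bullet> snd z \<partial>\<pi>)" .
qed



theorem proposition2p5:
  fixes \<mu> :: "'a::euclidean_space measure"
  assumes "prob_fm \<mu>"
    and "\<not> (\<exists>H. affine_hyperplane H \<and> msupport \<mu> \<subseteq> H)"
  shows "\<exists>c>0. \<forall>\<rho>::'a measure. prob_fm \<rho> \<and> (\<integral>x. x \<partial>\<rho>) = 0 \<longrightarrow>
           max_corr \<rho> \<mu> \<ge> ereal (c * (\<integral>x. norm x \<partial>\<rho>))"
proof -
  have fm\<mu>: "prob_fm \<mu>" by fact
  interpret mu: prob_space \<mu> using fm\<mu> by (simp add: prob_fm_def)
  have sets\<mu>: "sets \<mu> = sets borel" using fm\<mu> by (simp add: prob_fm_def)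
  have bm\<mu>: "borel_measurable \<mu> = borel_measurable borel" by (rule sets_borel_measurable_eq[OF sets\<mu>])
  have intn\<mu>: "integrable \<mu> (\<lambda>x. norm x)" using fm\<mu> by (simp add: prob_fm_def)
  have inty\<mu>: "integrable \<mu> (\<lambda>x. x)"
    by (rule integrable_norm_cancel[OF intn\<mu>]) (simp add: bm\<mu>)
  define E where "E w = (\<integral>z. arctan (w \<bullet> z) \<partial>\<mu>)" for w
  define G where "G w y = arctan (w \<bullet> y) - E w" for w y
  define V where "V w = (\<integral>y. G w y *\<^sub>R y \<partial>\<mu>)" for w
  have Vpos: "w \<bullet> V w > 0" if "w \<noteq> 0" for w
    using cov_pos[OF assms(1,2) that] by (simp add: V_def G_def E_def)
  obtain W \<delta> where W: "finite W" "\<delta> > 0" "\<And>x. \<delta> * norm x \<le> (\<Sum>w\<in>W. max 0 (x \<bullet> V w))"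
    using finite_cover_dir[of V, OF Vpos] by blast
  define t where "t = 1 / (pi * (real (card W) + 1))"
  have tpos: "t > 0" by (simp add: t_def)
  have tpi: "real (card W) * (t * pi) < 1"
  proof -
    have d: "0 < real (card W) + 1" by simp
    have "t * pi = 1 / (real (card W) + 1)"
      using pi_gt_zero d unfolding t_def by (simp add: divide_simps)
    then have "real (card W) * (t * pi) = real (card W) / (real (card W) + 1)" by simp
    also have "\<dots> < 1" using d by (simp add: field_simps)
    finally show ?thesis .
  qed
  have inth: "integrable \<mu> (\<lambda>z. arctan (w \<bullet> z))" for w
    by (rule mu.integrable_const_bound[where B="pi/2", OF AE_I2[OF arctan_abs_le[folded real_norm_def]]]) (simp add: bm\<mu>)
  have Eb: "\<bar>E w\<bar> \<le> pi/2" for w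
  proof -
    have "\<bar>E w\<bar> \<le> (\<integral>z. \<bar>arctan (w \<bullet> z)\<bar> \<partial>\<mu>)"
      unfolding E_def using integral_norm_bound[of \<mu> "\<lambda>z. arctan (w \<bullet> z)"] by simp
    also have "\<dots> \<le> pi/2"
      by (rule mu.integral_le_const) (use inth arctan_abs_le in auto)
    finally show ?thesis .
  qed
  have Gb: "\<bar>G w y\<bar> \<le> pi" for w y
    using Eb[of w] arctan_abs_le[of "w \<bullet> y"] unfolding G_def by linarith
  have Gm: "G w \<in> borel_measurable borel" for w
    unfolding G_def by measurable
  have intG: "integrable \<mu> (G w)" for w
    unfolding G_def using inth by simp
  have intG0: "(\<integral>y. G w y \<partial>\<mu>) = 0" for w
    unfolding G_def using inth by (simp add: Bochner_Integration.integral_diff mu.prob_space E_def)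
  have intGy: "integrable \<mu> (\<lambda>y. G w y *\<^sub>R y)" for w
    by (rule integrable_bdd_mult[OF inty\<mu> _ Gb]) (simp add: bm\<mu> Gm)
  have intGx: "integrable \<mu> (\<lambda>y. G w y * (x \<bullet> y))" for w x
  proof -
    have "integrable \<mu> (\<lambda>y. G w y *\<^sub>R (x \<bullet> y))"
      by (rule integrable_bdd_mult[OF _ _ Gb]) (use inty\<mu> in \<open>simp_all add: bm\<mu> Gm\<close>)
    then show ?thesis by simp
  qed
  have GV: "(\<integral>y. G w y * (x \<bullet> y) \<partial>\<mu>) = x \<bullet> V w" for w x
  proof -
    have "x \<bullet> V w = (\<integral>y. x \<bullet> (G w y *\<^sub>R y) \<partial>\<mu>)"
      unfolding V_def by (rule integral_inner_right[symmetric]) (rule intGy)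
    then show ?thesis by simp
  qed
  define m where "m = (\<integral>y. y \<partial>\<mu>)"
  have intxy: "(\<integral>y. x \<bullet> y \<partial>\<mu>) = x \<bullet> m" for x
    unfolding m_def using inty\<mu> by simp
  show ?thesis
  proof (intro exI[of _ "t * \<delta>"] conjI allI impI)
    show "t * \<delta> > 0" using tpos W(2) by simp
    fix \<rho> :: "'a measure"
    assume asm: "prob_fm \<rho> \<and> (\<integral>x. x \<partial>\<rho>) = 0"
    then have fm\<rho>: "prob_fm \<rho>" and bary: "(\<integral>x. x \<partial>\<rho>) = 0" by auto
    interpret rho: prob_space \<rho> using fm\<rho> by (simp add: prob_fm_def)
    interpret p: pair_prob_space \<rho> \<mu> by unfold_locales
    have sets\<rho>: "sets \<rho> = sets borel" using fm\<rho> by (simp add: prob_fm_def)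
    have bm\<rho>: "borel_measurable \<rho> = borel_measurable borel" by (rule sets_borel_measurable_eq[OF sets\<rho>])
    have intn\<rho>: "integrable \<rho> (\<lambda>x. norm x)" using fm\<rho> by (simp add: prob_fm_def)
    have inty\<rho>: "integrable \<rho> (\<lambda>x. x)"
      by (rule integrable_norm_cancel[OF intn\<rho>]) (simp add: bm\<rho>)
    define s where "s w x = (if 0 < x \<bullet> V w then 1 else 0 :: real)" for w x
    define p where "p w = (\<integral>x. s w x \<partial>\<rho>)" for w
    define a where "a w x = t * (s w x - p w)" for w x
    define f where "f z = 1 + (\<Sum>w\<in>W. a w (fst z) * G w (snd z))" for z
    have sm: "s w \<in> borel_measurable borel" for w
      unfolding s_def by measurable
    have ints: "integrable \<rho> (s w)" for w
      by (rule rho.integrable_const_bound[where B=1]) (auto simp: s_def bm\<rho> sm)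
    have p01: "0 \<le> p w" "p w \<le> 1" for w
      unfolding p_def using ints
      by (auto intro!: integral_nonneg rho.integral_le_const simp: s_def)
    have ab: "\<bar>a w x\<bar> \<le> t" for w x
      using p01[of w] tpos unfolding a_def s_def by (auto simp: abs_mult)
    have am: "a w \<in> borel_measurable borel" for w
      unfolding a_def using sm by measurable
    have inta: "integrable \<rho> (a w)" for w
      unfolding a_def using ints by simp
    have inta0: "(\<integral>x. a w x \<partial>\<rho>) = 0" for w
      unfolding a_def using ints by (simp add: Bochner_Integration.integral_diff rho.prob_space p_def)
    have sumb: "\<bar>\<Sum>w\<in>W. a w x * G w y\<bar> < 1" for x y
    proof -
      have "\<bar>\<Sum>w\<in>W. a w x * G w y\<bar> \<le> (\<Sum>w\<in>W. \<bar>a w x * G w y\<bar>)" by (rule sum_abs)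
      also have "\<dots> \<le> (\<Sum>w\<in>W. t * pi)"
      proof (rule sum_mono)
        fix w assume "w \<in> W"
        show "\<bar>a w x * G w y\<bar> \<le> t * pi"
          unfolding abs_mult by (rule mult_mono[OF ab Gb]) (use tpos in auto)
      qed
      also have "\<dots> = real (card W) * (t * pi)" by simp
      also have "\<dots> < 1" by (rule tpi)
      finally show ?thesis .
    qed
    have fnn: "0 \<le> f z" for z
      using sumb[of "fst z" "snd z"] unfolding f_def by linarith
    have fb: "\<bar>f z\<bar> \<le> 2" for z
      using sumb[of "fst z" "snd z"] unfolding f_def by linarith
    note Gm[measurable] am[measurable]
    have fmeas: "f \<in> borel_measurable (borel \<Otimes>\<^sub>M borel)"
      unfolding f_def by measurable
    have intfy: "integrable \<mu> (\<lambda>y. f (x, y))" for x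
      unfolding f_def using intG by simp
    have intfx: "integrable \<rho> (\<lambda>x. f (x, y))" for y
      unfolding f_def using inta by simp
    have m1: "(\<integral>\<^sup>+y. ennreal (f (x,y)) \<partial>\<mu>) = 1" for x
    proof -
      have "(\<integral>\<^sup>+y. ennreal (f (x,y)) \<partial>\<mu>) = ennreal (\<integral>y. f (x,y) \<partial>\<mu>)"
        by (rule nn_integral_eq_integral[OF intfy]) (simp add: fnn)
      also have "(\<integral>y. f (x,y) \<partial>\<mu>) = 1"
        unfolding f_def using intG intG0 by (simp add: Bochner_Integration.integral_add Bochner_Integration.integral_sum mu.prob_space)
      finally show ?thesis by simp
    qed
    have m2: "(\<integral>\<^sup>+x. ennreal (f (x,y)) \<partial>\<rho>) = 1" for y
    proof -
      have "(\<integral>\<^sup>+x. ennreal (f (x,y)) \<partial>\<rho>) = ennreal (\<integral>x. f (x,y) \<partial>\<rho>)"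
        by (rule nn_integral_eq_integral[OF intfx]) (simp add: fnn)
      also have "(\<integral>x. f (x,y) \<partial>\<rho>) = 1"
        unfolding f_def using inta inta0 by (simp add: Bochner_Integration.integral_add Bochner_Integration.integral_sum rho.prob_space)
      finally show ?thesis by simp
    qed
    define \<pi> where "\<pi> = density (\<rho> \<Otimes>\<^sub>M \<mu>) f"
    have coup: "\<pi> \<in> couplings \<rho> \<mu>"
      unfolding \<pi>_def
      by (rule coupling_density[OF rho.prob_space_axioms sets\<rho> mu.prob_space_axioms sets\<mu> fmeas fnn m1 m2])
    have sP: "sets (\<rho> \<Otimes>\<^sub>M \<mu>) = sets (borel \<Otimes>\<^sub>M borel)"
      by (rule sets_pair_measure_cong[OF sets\<rho> sets\<mu>])
    have bmP: "borel_measurable (\<rho> \<Otimes>\<^sub>M \<mu>) = borel_measurable (borel \<Otimes>\<^sub>M borel)"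
      by (rule measurable_cong_sets[OF sP refl])
    have fmP: "f \<in> borel_measurable (\<rho> \<Otimes>\<^sub>M \<mu>)" unfolding bmP by (rule fmeas)
    have hmP: "(\<lambda>z. fst z \<bullet> snd z) \<in> borel_measurable (\<rho> \<Otimes>\<^sub>M \<mu>)"
      unfolding bmP by measurable
    have intnn: "integrable (\<rho> \<Otimes>\<^sub>M \<mu>) (\<lambda>z. norm (fst z) * norm (snd z))"
    proof (rule p.Fubini_integrable)
      show "(\<lambda>z. norm (fst z) * norm (snd z)) \<in> borel_measurable (\<rho> \<Otimes>\<^sub>M \<mu>)"
        unfolding bmP by measurable
      show "integrable \<rho> (\<lambda>x. \<integral>y. norm (norm (fst (x, y)) * norm (snd (x, y))) \<partial>\<mu>)"
        using intn\<rho> by simp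
      show "AE x in \<rho>. integrable \<mu> (\<lambda>y. norm (fst (x, y)) * norm (snd (x, y)))"
        using intn\<mu> by simp
    qed
    have intfh: "integrable (\<rho> \<Otimes>\<^sub>M \<mu>) (\<lambda>z. f z *\<^sub>R (fst z \<bullet> snd z))"
    proof (rule Bochner_Integration.integrable_bound[where f="\<lambda>z. 2 * (norm (fst z) * norm (snd z))"])
      show "integrable (\<rho> \<Otimes>\<^sub>M \<mu>) (\<lambda>z. 2 * (norm (fst z) * norm (snd z)))" using intnn by simp
      show "(\<lambda>z. f z *\<^sub>R (fst z \<bullet> snd z)) \<in> borel_measurable (\<rho> \<Otimes>\<^sub>M \<mu>)"
        using fmP hmP by measurable
      show "AE z in \<rho> \<Otimes>\<^sub>M \<mu>. norm (f z *\<^sub>R (fst z \<bullet> snd z)) \<le> norm (2 * (norm (fst z) * norm (snd z)))"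
      proof (rule AE_I2)
        fix z :: "'a \<times> 'a"
        have "norm (f z *\<^sub>R (fst z \<bullet> snd z)) = \<bar>f z\<bar> * \<bar>fst z \<bullet> snd z\<bar>" by (simp add: abs_mult)
        also have "\<dots> \<le> 2 * (norm (fst z) * norm (snd z))"
          by (rule mult_mono[OF fb Cauchy_Schwarz_ineq2]) auto
        finally show "norm (f z *\<^sub>R (fst z \<bullet> snd z)) \<le> norm (2 * (norm (fst z) * norm (snd z)))"
          by simp
      qed
    qed
    have inth\<pi>: "integrable \<pi> (\<lambda>z. fst z \<bullet> snd z)"
      unfolding \<pi>_def using integrable_density[OF hmP fmP AE_I2[OF fnn]] intfh by simp
    have I1: "(\<integral>z. fst z \<bullet> snd z \<partial>\<pi>) = (\<integral>x. (\<integral>y. f (x,y) * (x \<bullet> y) \<partial>\<mu>) \<partial>\<rho>)"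
    proof -
      have "(\<integral>z. fst z \<bullet> snd z \<partial>\<pi>) = (\<integral>z. f z *\<^sub>R (fst z \<bullet> snd z) \<partial>(\<rho> \<Otimes>\<^sub>M \<mu>))"
        unfolding \<pi>_def by (rule integral_density[OF hmP fmP AE_I2[OF fnn]])
      also have "\<dots> = (\<integral>x. (\<integral>y. f (x,y) *\<^sub>R (fst (x,y) \<bullet> snd (x,y)) \<partial>\<mu>) \<partial>\<rho>)"
        by (rule p.integral_fst'[OF intfh, symmetric])
      finally show ?thesis by simp
    qed
    have inner: "(\<integral>y. f (x,y) * (x \<bullet> y) \<partial>\<mu>) = x \<bullet> m + (\<Sum>w\<in>W. a w x * (x \<bullet> V w))" for x
    proof -
      have "(\<integral>y. f (x,y) * (x \<bullet> y) \<partial>\<mu>) = (\<integral>y. (x \<bullet> y) + (\<Sum>w\<in>W. a w x * (G w y * (x \<bullet> y))) \<partial>\<mu>)"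
        by (rule Bochner_Integration.integral_cong) (simp_all add: f_def algebra_simps sum_distrib_right sum_distrib_left)
      also have "\<dots> = (\<integral>y. x \<bullet> y \<partial>\<mu>) + (\<Sum>w\<in>W. a w x * (\<integral>y. G w y * (x \<bullet> y) \<partial>\<mu>))"
        using inty\<mu> intGx by (simp add: Bochner_Integration.integral_add Bochner_Integration.integral_sum)
      also have "\<dots> = x \<bullet> m + (\<Sum>w\<in>W. a w x * (x \<bullet> V w))"
        by (simp add: intxy GV)
      finally show ?thesis .
    qed
    have intxV: "integrable \<rho> (\<lambda>x. x \<bullet> v)" for v using inty\<rho> by simp
    have intxV0: "(\<integral>x. x \<bullet> v \<partial>\<rho>) = 0" for v using inty\<rho> bary by simp
    have intaxV: "integrable \<rho> (\<lambda>x. a w x * (x \<bullet> V w))" for w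
    proof -
      have "integrable \<rho> (\<lambda>x. a w x *\<^sub>R (x \<bullet> V w))"
        by (rule integrable_bdd_mult[OF intxV _ ab]) (simp add: bm\<rho> am)
      then show ?thesis by simp
    qed
    have outer_w: "(\<integral>x. a w x * (x \<bullet> V w) \<partial>\<rho>) = t * (\<integral>x. max 0 (x \<bullet> V w) \<partial>\<rho>)" for w
    proof -
      have "(\<integral>x. a w x * (x \<bullet> V w) \<partial>\<rho>) = (\<integral>x. t * max 0 (x \<bullet> V w) - (t * p w) * (x \<bullet> V w) \<partial>\<rho>)"
        by (rule Bochner_Integration.integral_cong) (auto simp: a_def s_def algebra_simps)
      also have "\<dots> = t * (\<integral>x. max 0 (x \<bullet> V w) \<partial>\<rho>) - (t * p w) * (\<integral>x. x \<bullet> V w \<partial>\<rho>)"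
        using intxV[of "V w"] by (simp add: Bochner_Integration.integral_diff)
      also have "\<dots> = t * (\<integral>x. max 0 (x \<bullet> V w) \<partial>\<rho>)" by (simp add: intxV0)
      finally show ?thesis .
    qed
    have I2: "(\<integral>x. (\<integral>y. f (x,y) * (x \<bullet> y) \<partial>\<mu>) \<partial>\<rho>) = t * (\<Sum>w\<in>W. \<integral>x. max 0 (x \<bullet> V w) \<partial>\<rho>)"
    proof -
      have "(\<integral>x. (\<integral>y. f (x,y) * (x \<bullet> y) \<partial>\<mu>) \<partial>\<rho>) = (\<integral>x. x \<bullet> m + (\<Sum>w\<in>W. a w x * (x \<bullet> V w)) \<partial>\<rho>)"
        by (simp add: inner)
      also have "\<dots> = (\<integral>x. x \<bullet> m \<partial>\<rho>) + (\<Sum>w\<in>W. \<integral>x. a w x * (x \<bullet> V w) \<partial>\<rho>)"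
        using intxV intaxV by (simp add: Bochner_Integration.integral_add Bochner_Integration.integral_sum)
      also have "\<dots> = t * (\<Sum>w\<in>W. \<integral>x. max 0 (x \<bullet> V w) \<partial>\<rho>)"
        by (simp add: intxV0 outer_w sum_distrib_left)
      finally show ?thesis .
    qed
    have I3: "t * \<delta> * (\<integral>x. norm x \<partial>\<rho>) \<le> t * (\<Sum>w\<in>W. \<integral>x. max 0 (x \<bullet> V w) \<partial>\<rho>)"
    proof -
      have "\<delta> * (\<integral>x. norm x \<partial>\<rho>) = (\<integral>x. \<delta> * norm x \<partial>\<rho>)" by simp
      also have "\<dots> \<le> (\<integral>x. (\<Sum>w\<in>W. max 0 (x \<bullet> V w)) \<partial>\<rho>)"
        by (rule integral_mono) (use intn\<rho> intxV W(3) in auto)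
      also have "\<dots> = (\<Sum>w\<in>W. \<integral>x. max 0 (x \<bullet> V w) \<partial>\<rho>)"
        using Bochner_Integration.integral_sum[where I=W and M=\<rho> and f="\<lambda>w x. max 0 (x \<bullet> V w)"] intxV by simp
      finally show ?thesis using tpos by (simp add: mult.assoc)
    qed
    have cp: "corr_pos \<pi> < \<infinity>" and ci: "corr_integral \<pi> = ereal (\<integral>z. fst z \<bullet> snd z \<partial>\<pi>)"
      using corr_of_integrable[OF inth\<pi>] by auto
    have "ereal (t * \<delta> * (\<integral>x. norm x \<partial>\<rho>)) \<le> corr_integral \<pi>"
      using I1 I2 I3 ci by simp
    also have "\<dots> \<le> max_corr \<rho> \<mu>"
      unfolding max_corr_def using coup cp by (intro SUP_upper) auto
    finally show "ereal (t * \<delta> * (\<integral>x. norm x \<partial>\<rho>)) \<le> max_corr \<rho> \<mu>" .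
  qed
qed

end
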